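(* Let $t,q\ge 1$ and $s_1,\dots,s_t\ge 2$ be integers, and let $G^*=K_1\vee (C_{s_1}\cup\cdots\cup C_{s_t}\cup qK_2)$, where $C_2$ denotes a digon (two parallel edges between the same two vertices). If $n$ is the number of vertices of $G^*$, then the largest $Q$-eigenvalue $\sigma_1(G^* )$ equals the largest root of $\lambda^3-(n+7)\lambda^2+(7n+8)\lambda-12n+4q+12$.
   Context: Multigraphs without loops are allowed: the degree of a vertex is the number of edges incident to it, and the $(u,v)$ entry of the adjacency matrix $A$ is the number of edges joining $u$ and $v$. $Q=A+D$ with $D$ the diagonal degree matrix; $\sigma_1$ denotes its largest eigenvalue. $K_1\vee H$ adds one vertex adjacent (by a single edge) to every vertex of $H$; $\cup$ is disjoint union; $qK_2$ is $q$ disjoint edges. *)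

theory Defs
  imports "HOL-Computational_Algebra.Polynomial"
begin

text \<open>A (loopless) multigraph on a finite vertex set V is given by a symmetric
  function A :: 'v => 'v => nat, where A u v is the number of edges joining u and v
  (the adjacency matrix). Only the values on V x V matter.\<close>

definition mg_degree :: "'v set \<Rightarrow> ('v \<Rightarrow> 'v \<Rightarrow> nat) \<Rightarrow> 'v \<Rightarrow> nat" where
  "mg_degree V A u = (\<Sum>v\<in>V. A u v)"

definition signless_laplacian :: "'v set \<Rightarrow> ('v \<Rightarrow> 'v \<Rightarrow> nat) \<Rightarrow> 'v \<Rightarrow> 'v \<Rightarrow> real" where
  "signless_laplacian V A u v =
     real (A u v) + (if u = v then real (mg_degree V A u) else 0)"

definition is_eigenvalue_on :: "'v set \<Rightarrow> ('v \<Rightarrow> 'v \<Rightarrow> real) \<Rightarrow> real \<Rightarrow> bool" where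
  "is_eigenvalue_on V M mu \<longleftrightarrow>
     (\<exists>x :: 'v \<Rightarrow> real. (\<exists>u\<in>V. x u \<noteq> 0) \<and>
        (\<forall>u\<in>V. (\<Sum>v\<in>V. M u v * x v) = mu * x u))"

definition sigma1 :: "'v set \<Rightarrow> ('v \<Rightarrow> 'v \<Rightarrow> nat) \<Rightarrow> real" where
  "sigma1 V A = Max {mu. is_eigenvalue_on V (signless_laplacian V A) mu}"

datatype vtx = Hub | Cyc nat nat | Mt nat bool

text \<open>Vertices: the hub (the K_1); Cyc i j is vertex j (0 <= j < s i) of the i-th
  cycle (0 <= i < t); Mt k b are the two endpoints of the k-th copy of K_2 (k < q).\<close>
definition gstar_vertices :: "nat \<Rightarrow> (nat \<Rightarrow> nat) \<Rightarrow> nat \<Rightarrow> vtx set" where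
  "gstar_vertices t s q =
     {Hub} \<union> {Cyc i j | i j. i < t \<and> j < s i} \<union> {Mt k b | k b. k < q}"

text \<open>Edge multiplicity in the cycle C_s on vertices 0..s-1 with edges {j, (j+1) mod s};
  for s = 2 this yields the digon (two parallel edges between 0 and 1).\<close>
definition cyc_mult :: "nat \<Rightarrow> nat \<Rightarrow> nat \<Rightarrow> nat" where
  "cyc_mult s a b = card {j. j < s \<and>
      ((a = j \<and> b = (j + 1) mod s) \<or> (b = j \<and> a = (j + 1) mod s))}"

fun gstar_adj :: "(nat \<Rightarrow> nat) \<Rightarrow> vtx \<Rightarrow> vtx \<Rightarrow> nat" where
  "gstar_adj s Hub Hub = 0"
| "gstar_adj s Hub (Cyc i j) = 1"
| "gstar_adj s Hub (Mt k b) = 1"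
| "gstar_adj s (Cyc i j) Hub = 1"
| "gstar_adj s (Mt k b) Hub = 1"
| "gstar_adj s (Cyc i a) (Cyc i' b) = (if i = i' then cyc_mult (s i) a b else 0)"
| "gstar_adj s (Mt k b) (Mt k' b') = (if k = k' \<and> b \<noteq> b' then 1 else 0)"
| "gstar_adj s (Cyc i a) (Mt k b) = 0"
| "gstar_adj s (Mt k b) (Cyc i a) = 0"

end

theory Submission
  imports Defs "Jordan_Normal_Form.Spectral_Radius"
begin

lemma finite_eig:
  assumes fin: "finite V"
  shows "finite {mu. is_eigenvalue_on V M mu}"
proof -
  obtain f where f: "bij_betw f {0..<card V} V" using ex_bij_betw_nat_finite[OF fin] by blast
  define N where "N = card V"
  define A :: "real mat" where "A = mat N N (\<lambda>(i,j). M (f i) (f j))"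
  have Ac: "A \<in> carrier_mat N N" unfolding A_def by simp
  have "{mu. is_eigenvalue_on V M mu} \<subseteq> spectrum A"
  proof
    fix mu assume "mu \<in> {mu. is_eigenvalue_on V M mu}"
    then obtain x u where u: "u \<in> V" "x u \<noteq> 0" and ev: "\<forall>u\<in>V. (\<Sum>v\<in>V. M u v * x v) = mu * x u"
      unfolding is_eigenvalue_on_def by blast
    define w where "w = vec N (\<lambda>i. x (f i))"
    obtain i where i: "i < N" "f i = u" using f u unfolding N_def bij_betw_def by (metis atLeastLessThan_iff imageE)
    have "w \<noteq> 0\<^sub>v N"
    proof
      assume "w = 0\<^sub>v N"
      then have "w $ i = 0" using i by simp
      then show False using i u unfolding w_def by simp
    qed
    moreover have "A *\<^sub>v w = mu \<cdot>\<^sub>v w"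
    proof (rule eq_vecI)
      fix k assume k: "k < dim_vec (mu \<cdot>\<^sub>v w)"
      then have kN: "k < N" unfolding w_def by simp
      have "(A *\<^sub>v w) $ k = (\<Sum>j\<in>{0..<N}. M (f k) (f j) * x (f j))"
        using kN unfolding A_def w_def by (simp add: scalar_prod_def)
      also have "\<dots> = (\<Sum>v\<in>V. M (f k) v * x v)"
        using sum.reindex_bij_betw[OF f, of "\<lambda>v. M (f k) v * x v"] unfolding N_def by simp
      also have "\<dots> = mu * x (f k)" using ev f kN unfolding N_def bij_betw_def by auto
      finally show "(A *\<^sub>v w) $ k = (mu \<cdot>\<^sub>v w) $ k" using kN unfolding w_def by simp
    qed (simp add: A_def w_def)
    ultimately have "eigenvector A w mu" unfolding eigenvector_def A_def w_def by simp
    then show "mu \<in> spectrum A" unfolding spectrum_def eigenvalue_def by auto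
  qed
  then show ?thesis using card_finite_spectrum(1)[OF Ac] finite_subset by blast
qed

lemma perron_bound:
  assumes fin: "finite V"
    and nn: "\<And>u v. u \<in> V \<Longrightarrow> v \<in> V \<Longrightarrow> M u v \<ge> 0"
    and sym: "\<And>u v. u \<in> V \<Longrightarrow> v \<in> V \<Longrightarrow> M u v = M v u"
    and ypos: "\<And>u. u \<in> V \<Longrightarrow> y u > 0"
    and yev: "\<And>u. u \<in> V \<Longrightarrow> (\<Sum>v\<in>V. M u v * y v) = r * y u"
    and ev: "is_eigenvalue_on V M mu"
  shows "mu \<le> r"
proof -
  obtain x u0 where u0: "u0 \<in> V" "x u0 \<noteq> 0" and ex: "\<forall>u\<in>V. (\<Sum>v\<in>V. M u v * x v) = mu * x u"
    using ev unfolding is_eigenvalue_on_def by blast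
  have tri: "\<bar>mu\<bar> * \<bar>x u\<bar> \<le> (\<Sum>v\<in>V. M u v * \<bar>x v\<bar>)" if u: "u \<in> V" for u
  proof -
    have "\<bar>mu\<bar> * \<bar>x u\<bar> = \<bar>\<Sum>v\<in>V. M u v * x v\<bar>" using ex u by (simp add: abs_mult)
    also have "\<dots> \<le> (\<Sum>v\<in>V. \<bar>M u v * x v\<bar>)" by (rule sum_abs)
    also have "\<dots> = (\<Sum>v\<in>V. M u v * \<bar>x v\<bar>)"
      by (rule sum.cong) (auto simp: abs_mult nn u)
    finally show ?thesis .
  qed
  define S where "S = (\<Sum>u\<in>V. y u * \<bar>x u\<bar>)"
  have Spos: "S > 0"
  proof -
    have "0 < y u0 * \<bar>x u0\<bar>" using u0 ypos by simp
    also have "\<dots> \<le> S" unfolding S_def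
      by (rule member_le_sum) (use u0 fin ypos in \<open>auto intro!: mult_nonneg_nonneg simp: less_imp_le\<close>)
    finally show ?thesis .
  qed
  have "\<bar>mu\<bar> * S = (\<Sum>u\<in>V. y u * (\<bar>mu\<bar> * \<bar>x u\<bar>))" unfolding S_def
    by (simp add: sum_distrib_left algebra_simps)
  also have "\<dots> \<le> (\<Sum>u\<in>V. y u * (\<Sum>v\<in>V. M u v * \<bar>x v\<bar>))"
    by (rule sum_mono) (use tri ypos in \<open>auto intro: mult_left_mono less_imp_le\<close>)
  also have "\<dots> = (\<Sum>v\<in>V. \<bar>x v\<bar> * (\<Sum>u\<in>V. M v u * y u))"
  proof -
    have "(\<Sum>u\<in>V. y u * (\<Sum>v\<in>V. M u v * \<bar>x v\<bar>)) = (\<Sum>u\<in>V. \<Sum>v\<in>V. \<bar>x v\<bar> * (M v u * y u))"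
      by (rule sum.cong) (auto simp: sum_distrib_left sym algebra_simps intro!: sum.cong)
    also have "\<dots> = (\<Sum>v\<in>V. \<Sum>u\<in>V. \<bar>x v\<bar> * (M v u * y u))" by (rule sum.swap)
    also have "\<dots> = (\<Sum>v\<in>V. \<bar>x v\<bar> * (\<Sum>u\<in>V. M v u * y u))" by (simp add: sum_distrib_left)
    finally show ?thesis .
  qed
  also have "\<dots> = r * S" unfolding S_def using yev
    by (simp add: sum_distrib_left algebra_simps)
  finally have "\<bar>mu\<bar> * S \<le> r * S" .
  then have "\<bar>mu\<bar> \<le> r" using Spos by simp
  then show ?thesis by simp
qed

lemma cyc_mult_sym: "cyc_mult s a b = cyc_mult s b a"
  unfolding cyc_mult_def by (rule arg_cong[where f=card]) auto

lemma gstar_adj_sym: "gstar_adj s u v = gstar_adj s v u"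
  by (cases u; cases v) (auto simp: cyc_mult_sym)

lemma Suc_mod_lt: "(b::nat) < s \<Longrightarrow> Suc b mod s = (if Suc b = s then 0 else Suc b)"
  by (simp add: mod_Suc)

lemma cyc_mult_eq:
  assumes s: "s \<ge> 2" and a: "a < s" and b: "b < s"
  shows "cyc_mult s a b = (if b = (if Suc a = s then 0 else Suc a) then 1 else 0)
                         + (if b = (if a = 0 then s - 1 else a - 1) then 1 else 0)"
proof -
  define S1 where "S1 = (if b = (if Suc a = s then 0 else Suc a) then {a} else {})"
  define S2 where "S2 = (if b = (if a = 0 then s - 1 else a - 1) then {b} else {})"
  have eq: "{j. j < s \<and> ((a = j \<and> b = (j + 1) mod s) \<or> (b = j \<and> a = (j + 1) mod s))} = S1 \<union> S2"
    using a b s unfolding S1_def S2_def by (auto simp: Suc_mod_lt split: if_splits dest: dvd_imp_le)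
  have dis: "S1 \<inter> S2 = {}"
    using a b s unfolding S1_def S2_def by (auto split: if_splits)
  have "cyc_mult s a b = card (S1 \<union> S2)" unfolding cyc_mult_def eq ..
  also have "\<dots> = card S1 + card S2" using dis unfolding S1_def S2_def
    by (intro card_Un_disjoint) auto
  finally show ?thesis unfolding S1_def S2_def by simp
qed

lemma sum_cyc_mult:
  assumes s: "s \<ge> 2" and a: "a < s"
  shows "(\<Sum>b<s. cyc_mult s a b) = 2"
proof -
  have "(\<Sum>b<s. cyc_mult s a b) = (\<Sum>b<s. (if b = (if Suc a = s then 0 else Suc a) then 1 else 0)
                         + (if b = (if a = 0 then s - 1 else a - 1) then 1 else 0))"
    by (rule sum.cong) (auto simp: cyc_mult_eq s a)
  also have "\<dots> = 2" using s a by (auto simp: sum.distrib)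
  finally show ?thesis .
qed

lemma gstar_decomp:
  "gstar_vertices t s q = insert Hub ((\<lambda>(i,j). Cyc i j) ` (SIGMA i:{..<t}. {..<s i})
      \<union> (\<lambda>(k,b). Mt k b) ` ({..<q} \<times> UNIV))"
  unfolding gstar_vertices_def by auto

lemma finite_gstar: "finite (gstar_vertices t s q)"
  unfolding gstar_decomp by auto

lemma sum_gstar:
  "(\<Sum>v\<in>gstar_vertices t s q. g v) = g Hub + (\<Sum>i<t. \<Sum>j<s i. g (Cyc i j))
      + (\<Sum>k<q. g (Mt k True) + g (Mt k False))"
proof -
  let ?C = "(\<lambda>(i,j). Cyc i j) ` (SIGMA i:{..<t}. {..<s i})"
  let ?M = "(\<lambda>(k,b). Mt k b) ` ({..<q} \<times> (UNIV::bool set))"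
  have "(\<Sum>v\<in>gstar_vertices t s q. g v) = g Hub + (\<Sum>v\<in>?C \<union> ?M. g v)"
    unfolding gstar_decomp by (subst sum.insert) auto
  also have "(\<Sum>v\<in>?C \<union> ?M. g v) = (\<Sum>v\<in>?C. g v) + (\<Sum>v\<in>?M. g v)"
    by (rule sum.union_disjoint) auto
  also have "(\<Sum>v\<in>?C. g v) = (\<Sum>i<t. \<Sum>j<s i. g (Cyc i j))"
    by (subst sum.reindex) (auto simp: inj_on_def sum.Sigma prod.case_distrib)
  also have "(\<Sum>v\<in>?M. g v) = (\<Sum>k<q. g (Mt k True) + g (Mt k False))"
  proof -
    have "(\<Sum>v\<in>?M. g v) = (\<Sum>x\<in>{..<q} \<times> (UNIV::bool set). g (case x of (k,b) \<Rightarrow> Mt k b))"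
      by (subst sum.reindex) (auto simp: inj_on_def)
    also have "\<dots> = (\<Sum>k<q. \<Sum>b\<in>UNIV. g (Mt k b))"
      by (simp add: sum.cartesian_product prod.case_distrib)
    also have "\<dots> = (\<Sum>k<q. g (Mt k True) + g (Mt k False))" by (simp add: UNIV_bool add.commute)
    finally show ?thesis .
  qed
  finally show ?thesis by (simp add: add.assoc)
qed

lemma card_gstar: "card (gstar_vertices t s q) = 1 + (\<Sum>i<t. s i) + 2 * q"
proof -
  have "card (gstar_vertices t s q) = (\<Sum>v\<in>gstar_vertices t s q. 1)" by simp
  also have "\<dots> = 1 + (\<Sum>i<t. s i) + 2 * q" by (subst sum_gstar) simp
  finally show ?thesis .
qed

lemma deg_hub: "mg_degree (gstar_vertices t s q) (gstar_adj s) Hub = (\<Sum>i<t. s i) + 2 * q"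
  unfolding mg_degree_def by (subst sum_gstar) simp

lemma nested_delta:
  fixes i t :: nat
  assumes "i < t"
  shows "(\<Sum>i'<t. \<Sum>j<s i'. if i = i' then h j else (0::'a::comm_monoid_add)) = (\<Sum>j<s i. h j)"
proof -
  have "(\<Sum>i'<t. \<Sum>j<s i'. if i = i' then h j else (0::'a)) = (\<Sum>i'<t. if i = i' then (\<Sum>j<s i'. h j) else 0)"
    by (rule sum.cong) auto
  also have "\<dots> = (\<Sum>j<s i. h j)" by (subst sum.delta') (use assms in auto)
  finally show ?thesis .
qed

lemma deg_cyc:
  assumes "i < t" "j < s i" "s i \<ge> 2"
  shows "mg_degree (gstar_vertices t s q) (gstar_adj s) (Cyc i j) = 3"
proof -
  have "mg_degree (gstar_vertices t s q) (gstar_adj s) (Cyc i j)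
     = 1 + (\<Sum>i'<t. \<Sum>j'<s i'. if i = i' then cyc_mult (s i) j j' else 0)"
    unfolding mg_degree_def by (subst sum_gstar) simp
  also have "\<dots> = 3" using assms by (simp add: nested_delta sum_cyc_mult)
  finally show ?thesis .
qed

lemma mt_delta: "(\<Sum>k'<q. gstar_adj s (Mt k b) (Mt k' True) + gstar_adj s (Mt k b) (Mt k' False))
   = (\<Sum>k'<q. if k = k' then 1 else 0)"
  by (rule sum.cong) auto

lemma deg_mt:
  assumes "k < q"
  shows "mg_degree (gstar_vertices t s q) (gstar_adj s) (Mt k b) = 2"
  unfolding mg_degree_def using assms
  apply (subst sum_gstar) apply (subst mt_delta) by (simp add: sum.delta sum.delta')

lemma ev_hub: "(\<Sum>v\<in>gstar_vertices t s q. real (gstar_adj s Hub v) * case_vtx al (\<lambda>_ _. be) (\<lambda>_ _. ga) v)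
   = real (\<Sum>i<t. s i) * be + 2 * real q * ga"
  by (subst sum_gstar) (simp add: sum_distrib_right)

lemma ev_cyc:
  assumes "i < t" "j < s i" "s i \<ge> 2"
  shows "(\<Sum>v\<in>gstar_vertices t s q. real (gstar_adj s (Cyc i j) v) * case_vtx al (\<lambda>_ _. be) (\<lambda>_ _. ga) v)
   = al + 2 * be"
proof -
  have "(\<Sum>i'<t. \<Sum>j'<s i'. real (if i = i' then cyc_mult (s i) j j' else 0) * be)
      = (\<Sum>i'<t. \<Sum>j'<s i'. if i = i' then real (cyc_mult (s i) j j') * be else 0)"
    by (intro sum.cong) auto
  also have "\<dots> = (\<Sum>j'<s i. real (cyc_mult (s i) j j') * be)"
    using assms by (simp add: nested_delta)
  also have "\<dots> = real (\<Sum>j'<s i. cyc_mult (s i) j j') * be"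
    by (simp add: sum_distrib_right)
  also have "\<dots> = 2 * be" using assms by (simp add: sum_cyc_mult)
  finally have X: "(\<Sum>i'<t. \<Sum>j'<s i'. real (if i = i' then cyc_mult (s i) j j' else 0) * be) = 2 * be" .
  show ?thesis by (subst sum_gstar) (simp add: X)
qed

lemma ev_mt:
  assumes "k < q"
  shows "(\<Sum>v\<in>gstar_vertices t s q. real (gstar_adj s (Mt k b) v) * case_vtx al (\<lambda>_ _. be) (\<lambda>_ _. ga) v)
   = al + ga"
proof -
  have "(\<Sum>k'<q. real (gstar_adj s (Mt k b) (Mt k' True)) * ga + real (gstar_adj s (Mt k b) (Mt k' False)) * ga)
     = real (\<Sum>k'<q. gstar_adj s (Mt k b) (Mt k' True) + gstar_adj s (Mt k b) (Mt k' False)) * ga"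
    by (simp add: of_nat_sum sum.distrib distrib_right sum_distrib_right sum_distrib_left)
  also have "\<dots> = ga" unfolding mt_delta using assms by (simp add: sum.delta sum.delta')
  finally have X: "(\<Sum>k'<q. real (gstar_adj s (Mt k b) (Mt k' True)) * ga + real (gstar_adj s (Mt k b) (Mt k' False)) * ga) = ga" .
  show ?thesis by (subst sum_gstar) (simp only: vtx.case X, simp)
qed

lemma Q_sum:
  assumes "finite V" "u \<in> V"
  shows "(\<Sum>v\<in>V. signless_laplacian V A u v * y v) = (\<Sum>v\<in>V. real (A u v) * y v) + real (mg_degree V A u) * y u"
proof -
  have "(\<Sum>v\<in>V. signless_laplacian V A u v * y v) = (\<Sum>v\<in>V. real (A u v) * y v + (if u = v then real (mg_degree V A u) * y v else 0))"
    unfolding signless_laplacian_def by (rule sum.cong) (auto simp: distrib_right)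
  also have "\<dots> = (\<Sum>v\<in>V. real (A u v) * y v) + real (mg_degree V A u) * y u"
    using assms by (simp add: sum.distrib sum.delta)
  finally show ?thesis .
qed

lemma gstar_mem:
  assumes "u \<in> gstar_vertices t s q"
  obtains "u = Hub" | i j where "u = Cyc i j" "i < t" "j < s i" | k b where "u = Mt k b" "k < q"
  using assms unfolding gstar_vertices_def by auto

theorem lemma3p3:
  fixes t q :: nat and s :: "nat \<Rightarrow> nat" and n :: nat
  assumes "t \<ge> 1" and "q \<ge> 1" and "\<forall>i<t. s i \<ge> 2"
    and "n = card (gstar_vertices t s q)"
  shows "sigma1 (gstar_vertices t s q) (gstar_adj s) =
    Max {mu::real. poly [:12 - 12 * real n + 4 * real q, 7 * real n + 8, - (real n + 7), 1:] mu = 0}"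
proof -
  define V where "V = gstar_vertices t s q"
  define m where "m = (\<Sum>i<t. s i)"
  define P where "P = [:12 - 12 * real n + 4 * real q, 7 * real n + 8, - (real n + 7), 1:]"
  have finV: "finite V" unfolding V_def by (rule finite_gstar)
  have "s 0 \<le> m" unfolding m_def using assms(1) by (intro member_le_sum) auto
  then have m2: "m \<ge> 2" using assms(1,3) by force
  have nm: "real n = 1 + real m + 2 * real q" using assms(4) card_gstar[of t s q] unfolding m_def by simp
  have polyP: "poly P x = x^3 - (real n + 7) * x^2 + (7 * real n + 8) * x + (12 - 12 * real n + 4 * real q)" for x
    by (simp add: P_def algebra_simps power2_eq_square power3_eq_cube)
  have P0: "P \<noteq> 0" by (simp add: P_def)
  have finR: "finite {mu. poly P mu = 0}" by (rule poly_roots_finite[OF P0])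
  have p5: "poly P 5 = - 2 * real m" unfolding polyP nm by (simp add: algebra_simps)
  have pb: "poly P (real n + 12) = 5 * (real n + 12)^2 + 7 * (real n)^2 + 80 * real n + 108 + 4 * real q"
    unfolding polyP by (simp add: algebra_simps power2_eq_square power3_eq_cube)
  have "poly P 5 \<le> 0" using p5 by simp
  moreover have "0 \<le> poly P (real n + 12)" unfolding pb by simp
  ultimately obtain x0 where x0: "5 \<le> x0" "x0 \<le> real n + 12" "poly P x0 = 0"
    using IVT[of "poly P" 5 0 "real n + 12"] by auto
  have "x0 \<noteq> 5" using x0(3) p5 m2 by auto
  with x0 have x05: "x0 > 5" by simp
  define r where "r = Max {mu. poly P mu = 0}"
  have rroot: "poly P r = 0" unfolding r_def using finR x0(3) Max_in[OF finR] by auto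
  have "x0 \<le> r" unfolding r_def using finR x0(3) by (intro Max_ge) auto
  with x05 have r5: "r > 5" by simp
  define y where "y = case_vtx ((r-5)*(r-3)) (\<lambda>_ _. r-3) (\<lambda>_ _. r-5)"
  let ?Q = "signless_laplacian V (gstar_adj s)"
  have ypos: "y u > 0" if "u \<in> V" for u
    using r5 by (cases u) (auto simp: y_def)
  have yev: "(\<Sum>v\<in>V. ?Q u v * y v) = r * y u" if u: "u \<in> V" for u
  proof -
    have QS: "(\<Sum>v\<in>V. ?Q u v * y v) = (\<Sum>v\<in>V. real (gstar_adj s u v) * y v) + real (mg_degree V (gstar_adj s) u) * y u"
      by (rule Q_sum[OF finV u])
    from u[unfolded V_def] show ?thesis
    proof (cases rule: gstar_mem)
      case 1
      have ms: "(\<Sum>x<t. real (s x)) = real m" by (simp add: m_def)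
      have "r * ((r-5)*(r-3)) - real (m + 2*q) * ((r-5)*(r-3)) - real m * (r-3) - 2 * real q * (r-5) = poly P r"
        unfolding polyP nm by (simp add: algebra_simps power2_eq_square power3_eq_cube)
      then show ?thesis using rroot unfolding QS unfolding 1 V_def y_def
        by (simp add: ev_hub[where al="(r-5)*(r-3)" and be="r-3" and ga="r-5", simplified] deg_hub m_def[symmetric] ms algebra_simps)
    next
      case (2 i j)
      have si: "s i \<ge> 2" using assms(3) 2 by auto
      show ?thesis unfolding QS unfolding 2 V_def y_def
        using ev_cyc[where s=s and i=i and t=t and j=j and q=q and al="(r-5)*(r-3)" and be="r-3" and ga="r-5", OF 2(2,3) si]
          deg_cyc[where s=s and i=i and t=t and j=j and q=q, OF 2(2,3) si]
        by (simp add: algebra_simps)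
    next
      case (3 k b)
      show ?thesis unfolding QS unfolding 3 V_def y_def
        using ev_mt[where k=k and q=q and s=s and b=b and t=t and al="(r-5)*(r-3)" and be="r-3" and ga="r-5", OF 3(2)]
          deg_mt[where k=k and q=q and s=s and b=b and t=t, OF 3(2)]
        by (simp add: algebra_simps)
    qed
  qed
  have nn: "?Q u v \<ge> 0" for u v unfolding signless_laplacian_def by simp
  have sym: "?Q u v = ?Q v u" for u v unfolding signless_laplacian_def using gstar_adj_sym[of s u v] by simp
  have HV: "Hub \<in> V" unfolding V_def gstar_vertices_def by simp
  have reig: "is_eigenvalue_on V ?Q r"
    unfolding is_eigenvalue_on_def using HV ypos[OF HV] yev by (intro exI[of _ y]) (auto intro!: bexI[of _ Hub])
  have bound: "mu \<le> r" if "is_eigenvalue_on V ?Q mu" for mu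
    by (rule perron_bound[OF finV _ _ ypos yev that]) (auto simp: nn sym)
  have "sigma1 V (gstar_adj s) = r" unfolding sigma1_def
    by (rule Max_eqI[OF finite_eig[OF finV]]) (use reig bound in auto)
  then show ?thesis unfolding V_def r_def P_def by simp
qed

end
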